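(* Let $k\ge3$ and let $\{S_n\}$ be a perturbed sequence of weak shifts of degree $d$ corresponding to a uniformly bounded sequence of weak shift-like maps of degree $\tilde d\le d-2$, with Green function $G$. For each $m\ge1$ let $\mathsf G_m$ be the Green function of the periodic sequence $\{s^m_n\}_{n\ge1}$. Then for every compact set $C\subset\mathbb{C}^k$ and every $\epsilon>0$ there exists $\mathbf m_C\ge1$ such that $\sup_{z\in C}|G(z)-\mathsf G_m(z)|<\epsilon$ for all $m\ge\mathbf m_C$.
   Context: Let $Q_m(z)=z^m$ and $\mathbf H_d(w_1,\dots,w_{k-1})=\sum_{i=1}^{k-1}w_i^d$. A uniformly bounded sequence of weak shift-like maps of degree $\tilde d\ge1$ is a sequence $\mathsf S_n(z)=(z_2,\dots,z_k,a_nz_1+p_n(z_2,\dots,z_k))$ with $\deg(a_nz_1+p_n)=\tilde d$, $p_n=\sum_i\alpha_{i,n}\mathbf z^i$, and constants $\tilde m,\tilde M>0$ with $\tilde m<|a_n|<\tilde M$, $|\alpha_{i,n}|<\tilde M$. The associated perturbed sequence of weak shifts of degree $d\ge\tilde d+2$ is $S_n(z)=\mathsf S_n(z)+(0,\dots,0,Q_{d-1}(z_2),\mathbf H_d(z_2,\dots,z_k))$. For any such sequence $\{T_n\}$, with $T(n)=T_n\circ\cdots\circ T_1$, its escaping set is $U^+_{\{T_n\}}=\{z:\overline{T(n)}([z:1])\to[0:\cdots:0:1:0]\}$ (extension to $\mathbb{P}^k$, limit point with only the $k$-th homogeneous coordinate nonzero), and its Green function is $z\mapsto\lim_{n\to\infty}d^{-n}\log^+\|T(n)(z)\|_{\sup}$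 on $U^+_{\{T_n\}}$ and $0$ on $\mathbb{C}^k\setminus U^+_{\{T_n\}}$ ($\|\cdot\|_{\sup}$ the sup-norm, $\log^+=\max\{\log,0\}$). $G$ denotes the Green function of $\{S_n\}$. For $m\ge1$, $s^m_n=S_j$ where $j\in\{1,\dots,m\}$ and $j\equiv n\pmod m$; $\{s^m_n\}$ is again such a perturbed sequence, and $\mathsf G_m$ is its Green function. *)

theory Defs
  imports "HOL-Analysis.Analysis"
begin

text \<open>Points of C^k are modelled as functions nat => complex whose coordinates
  z 1, ..., z k are the actual coordinates and which vanish outside {1..k}.
  The topology is the product topology on nat => complex, which on this
  subspace is the Euclidean topology of C^k.\<close>

definition Ck :: "nat \<Rightarrow> (nat \<Rightarrow> complex) set" where
  "Ck k = {z. \<forall>i. i \<notin> {1..k} \<longrightarrow> z i = 0}"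

definition supnorm :: "nat \<Rightarrow> (nat \<Rightarrow> complex) \<Rightarrow> real" where
  "supnorm k z = Max ((\<lambda>i. norm (z i)) ` {1..k})"

definition logplus :: "real \<Rightarrow> real" where
  "logplus x = max (ln x) 0"

text \<open>Multi-indices for monomials in z_2, ..., z_k with every exponent at most dt
  (a finite set containing all monomials of total degree at most dt).\<close>

definition midx :: "nat \<Rightarrow> nat \<Rightarrow> (nat \<Rightarrow> nat) set" where
  "midx k dt = (\<Pi>\<^sub>E j\<in>{2..k}. {..dt})"

definition mdeg :: "nat \<Rightarrow> (nat \<Rightarrow> nat) \<Rightarrow> nat" where
  "mdeg k i = (\<Sum>j=2..k. i j)"

definition poly_p :: "nat \<Rightarrow> nat \<Rightarrow> ((nat \<Rightarrow> nat) \<Rightarrow> complex) \<Rightarrow> (nat \<Rightarrow> complex) \<Rightarrow> complex" where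
  "poly_p k dt \<alpha> z = (\<Sum>i\<in>midx k dt. \<alpha> i * (\<Prod>j=2..k. z j ^ i j))"

definition pws :: "nat \<Rightarrow> nat \<Rightarrow> nat \<Rightarrow> complex \<Rightarrow> ((nat \<Rightarrow> nat) \<Rightarrow> complex)
    \<Rightarrow> (nat \<Rightarrow> complex) \<Rightarrow> (nat \<Rightarrow> complex)" where
  "pws k d dt a \<alpha> z = (\<lambda>j.
     if 1 \<le> j \<and> j \<le> k - 2 then z (j + 1)
     else if j = k - 1 then z k + z 2 ^ (d - 1)
     else if j = k then a * z 1 + poly_p k dt \<alpha> z + (\<Sum>i=2..k. z i ^ d)
     else 0)"

primrec comp_seq :: "(nat \<Rightarrow> 'a \<Rightarrow> 'a) \<Rightarrow> nat \<Rightarrow> 'a \<Rightarrow> 'a" where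
  "comp_seq T 0 = id"
| "comp_seq T (Suc n) = T (Suc n) \<circ> comp_seq T n"

text \<open>Convergence in P^N of a sequence of points given by homogeneous coordinate
  vectors w n (coordinates indexed 1..N+1) to the point with homogeneous coordinates p:
  convergence in some standard affine chart {w_j \<noteq> 0} containing p.\<close>

definition proj_conv :: "nat \<Rightarrow> (nat \<Rightarrow> nat \<Rightarrow> complex) \<Rightarrow> (nat \<Rightarrow> complex) \<Rightarrow> bool" where
  "proj_conv N w p \<longleftrightarrow>
     (\<exists>j\<in>{1..N+1}. p j \<noteq> 0 \<and> (\<forall>\<^sub>F n in sequentially. w n j \<noteq> 0) \<and>
        (\<forall>i\<in>{1..N+1}. ((\<lambda>n. w n i / w n j) \<longlongrightarrow> p i / p j) sequentially))"

definition hom :: "nat \<Rightarrow> (nat \<Rightarrow> complex) \<Rightarrow> (nat \<Rightarrow> complex)" where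
  "hom k z = (\<lambda>i. if i = k + 1 then 1 else if i \<in> {1..k} then z i else 0)"

definition ek :: "nat \<Rightarrow> (nat \<Rightarrow> complex)" where
  "ek k = (\<lambda>i. if i = k then 1 else 0)"

definition escaping :: "nat \<Rightarrow> (nat \<Rightarrow> (nat \<Rightarrow> complex) \<Rightarrow> (nat \<Rightarrow> complex))
    \<Rightarrow> (nat \<Rightarrow> complex) set" where
  "escaping k T = {z \<in> Ck k. proj_conv k (\<lambda>n. hom k (comp_seq T n z)) (ek k)}"

definition green :: "nat \<Rightarrow> nat \<Rightarrow> (nat \<Rightarrow> (nat \<Rightarrow> complex) \<Rightarrow> (nat \<Rightarrow> complex))
    \<Rightarrow> (nat \<Rightarrow> complex) \<Rightarrow> real" where
  "green k d T z = (if z \<in> escaping k T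
      then lim (\<lambda>n. logplus (supnorm k (comp_seq T n z)) / real d ^ n) else 0)"

definition periodize :: "nat \<Rightarrow> (nat \<Rightarrow> 'a) \<Rightarrow> (nat \<Rightarrow> 'a)" where
  "periodize m T = (\<lambda>n. T ((n - 1) mod m + 1))"

end

theory Submission
  imports Defs "HOL-Analysis.Analysis"
begin


lemma supnorm_ge: "1 \<le> k \<Longrightarrow> i \<in> {1..k} \<Longrightarrow> norm (z i) \<le> supnorm k z"
  unfolding supnorm_def by (intro Max_ge) auto

lemma supnorm_le: "1 \<le> k \<Longrightarrow> (\<And>i. i \<in> {1..k} \<Longrightarrow> norm (z i) \<le> B) \<Longrightarrow> supnorm k z \<le> B"
  unfolding supnorm_def by (subst Max_le_iff) auto

lemma supnorm_nonneg: "1 \<le> k \<Longrightarrow> 0 \<le> supnorm k z"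
  using supnorm_ge[of k k z] by (meson atLeastAtMost_iff norm_ge_zero order_trans order_refl)

lemma supnorm_eq: "1 \<le> k \<Longrightarrow> (\<And>i. i \<in> {1..k} \<Longrightarrow> norm (z i) \<le> norm (z k)) \<Longrightarrow> supnorm k z = norm (z k)"
  by (meson antisym supnorm_ge supnorm_le atLeastAtMost_iff order_refl)

lemma logplus_eq: "0 \<le> s \<Longrightarrow> logplus s = ln (max 1 s)"
  unfolding logplus_def
  by (cases "s \<le> 1") (auto simp: max_def ln_le_zero_iff less_eq_real_def ln_0 dest: ln_le_zero_iff[THEN iffD2])

lemma poly_bound:
  assumes "\<forall>i\<in>midx k dt. norm (\<alpha> i) \<le> Mt" "\<forall>i\<in>midx k dt. mdeg k i > dt \<longrightarrow> \<alpha> i = 0"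
    "\<And>j. j \<in> {2..k} \<Longrightarrow> norm (z j) \<le> L" "1 \<le> L"
  shows "norm (poly_p k dt \<alpha> z) \<le> real (card (midx k dt)) * Mt * L ^ dt"
proof -
  have "norm (poly_p k dt \<alpha> z) \<le> (\<Sum>i\<in>midx k dt. norm (\<alpha> i * (\<Prod>j=2..k. z j ^ i j)))"
    unfolding poly_p_def by (rule norm_sum)
  also have "\<dots> \<le> (\<Sum>i\<in>midx k dt. Mt * L ^ dt)"
  proof (rule sum_mono)
    fix i assume i: "i \<in> midx k dt"
    have Mt0: "0 \<le> Mt" using assms(1) i by (meson norm_ge_zero order_trans)
    show "norm (\<alpha> i * (\<Prod>j=2..k. z j ^ i j)) \<le> Mt * L ^ dt"
    proof (cases "mdeg k i > dt")
      case True then show ?thesis using assms(2) i Mt0 assms(4) by simp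
    next
      case False
      have "norm (\<Prod>j=2..k. z j ^ i j) = (\<Prod>j=2..k. norm (z j) ^ i j)"
        by (simp only: prod_norm[symmetric] norm_power)
      also have "\<dots> \<le> (\<Prod>j=2..k. L ^ i j)"
        by (intro prod_mono conjI power_mono assms(3)) auto
      also have "\<dots> = L ^ mdeg k i" unfolding mdeg_def by (simp add: power_sum)
      also have "\<dots> \<le> L ^ dt" using False assms(4) by (intro power_increasing) auto
      finally have "norm (\<Prod>j=2..k. z j ^ i j) \<le> L ^ dt" .
      then show ?thesis unfolding norm_mult
        using assms(1) i Mt0 by (intro mult_mono) auto
    qed
  qed
  also have "\<dots> = real (card (midx k dt)) * Mt * L ^ dt" by simp
  finally show ?thesis .
qed


lemma pws_lo: "j \<in> {1..k-2} \<Longrightarrow> pws k d dt a \<alpha> z j = z (j+1)"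
  unfolding pws_def by auto
lemma pws_km1: "3 \<le> k \<Longrightarrow> pws k d dt a \<alpha> z (k-1) = z k + z 2 ^ (d-1)"
  unfolding pws_def by auto
lemma pws_k: "3 \<le> k \<Longrightarrow> pws k d dt a \<alpha> z k = a * z 1 + poly_p k dt \<alpha> z + (\<Sum>i=2..k. z i ^ d)"
  unfolding pws_def by auto

definition "Vp k lam R z \<longleftrightarrow> R < norm (z k) \<and> (\<forall>i\<in>{1..k-1}. lam * norm (z i) \<le> norm (z k))"

lemma Vp_supnorm: assumes "1 \<le> k" "1 \<le> lam" "Vp k lam R z" shows "supnorm k z = norm (z k)"
proof (rule supnorm_eq[OF assms(1)])
  fix i assume i: "i \<in> {1..k}"
  show "norm (z i) \<le> norm (z k)"
  proof (cases "i = k")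
    case False
    then have "lam * norm (z i) \<le> norm (z k)" using assms(3) i unfolding Vp_def by auto
    moreover have "norm (z i) \<le> lam * norm (z i)" using assms(2) by (simp add: mult_le_cancel_right1)
    ultimately show ?thesis by linarith
  qed simp
qed

definition "Qc k dt Mt = real (card (midx k dt)) * Mt"
definition "lamc k = 4 * real k"
definition "Rc k dt Mt = 4 * lamc k + 4 * (Mt + Qc k dt Mt) + 4"
definition "Kc k dt Mt = 2 + Mt + Qc k dt Mt + real k"
definition "Bc k dt Mt = 2 * lamc k * Rc k dt Mt"

context
  fixes k d dt :: nat and a0 :: complex and \<alpha>0 :: "(nat \<Rightarrow> nat) \<Rightarrow> complex" and Mt :: real
  assumes k3: "3 \<le> k" and dt1: "1 \<le> dt" and dtd: "dt + 2 \<le> d" and Mt0: "0 \<le> Mt"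
    and aM: "norm a0 \<le> Mt" and alM: "\<forall>i\<in>midx k dt. norm (\<alpha>0 i) \<le> Mt"
    and al0: "\<forall>i\<in>midx k dt. mdeg k i > dt \<longrightarrow> \<alpha>0 i = 0"
begin

lemma Qc_nonneg: "0 \<le> Qc k dt Mt" unfolding Qc_def using Mt0 by simp

lemma coord_bounds:
  fixes z L
  assumes hz: "\<And>j. j \<in> {1..k} \<Longrightarrow> norm (z j) \<le> L" and L1: "1 \<le> L"
  shows "\<And>j. j \<in> {1..k-1} \<Longrightarrow> norm (pws k d dt a0 \<alpha>0 z j) \<le> 2 * L ^ (d-1)"
    and "norm (a0 * z 1 + poly_p k dt \<alpha>0 z) \<le> (Mt + Qc k dt Mt) * L ^ (d-2)"
proof -
  have LL: "L \<le> L ^ (d-1)" using L1 dtd power_increasing[of 1 "d-1" L] by simp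
  fix j assume j: "j \<in> {1..k-1}"
  show "norm (pws k d dt a0 \<alpha>0 z j) \<le> 2 * L ^ (d-1)"
  proof (cases "j = k-1")
    case True
    have "norm (z k + z 2 ^ (d-1)) \<le> norm (z k) + norm (z 2) ^ (d-1)"
      by (metis norm_power norm_triangle_ineq)
    also have "\<dots> \<le> L + L ^ (d-1)" using hz[of k] hz[of 2] k3
      by (intro add_mono power_mono) auto
    finally show ?thesis using True pws_km1[OF k3] LL by simp
  next
    case False
    then have "j \<in> {1..k-2}" using j by auto
    then have "norm (pws k d dt a0 \<alpha>0 z j) = norm (z (j+1))" by (simp add: pws_lo)
    also have "\<dots> \<le> L" using hz[of "j+1"] j by auto
    finally show ?thesis using LL L1 by simp
  qed
next
  have p: "norm (poly_p k dt \<alpha>0 z) \<le> Qc k dt Mt * L ^ dt"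
    unfolding Qc_def using hz L1 by (intro poly_bound alM al0) (auto simp: alM al0)
  have "L ^ dt \<le> L ^ (d-2)" using L1 dtd by (intro power_increasing) auto
  then have p2: "norm (poly_p k dt \<alpha>0 z) \<le> Qc k dt Mt * L ^ (d-2)"
    using p Qc_nonneg by (meson mult_left_mono order_trans)
  have "L \<le> L ^ (d-2)" using L1 dtd dt1 power_increasing[of 1 "d-2" L] by simp
  then have "norm (a0 * z 1) \<le> Mt * L ^ (d-2)"
  proof -
    have "norm (z 1) \<le> L" using hz[of 1] k3 by simp
    then have "norm a0 * norm (z 1) \<le> Mt * L" using aM Mt0 by (intro mult_mono) auto
    also have "\<dots> \<le> Mt * L ^ (d-2)" using \<open>L \<le> L ^ (d-2)\<close> Mt0 by (intro mult_left_mono)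
    finally show ?thesis by (simp add: norm_mult)
  qed
  then show "norm (a0 * z 1 + poly_p k dt \<alpha>0 z) \<le> (Mt + Qc k dt Mt) * L ^ (d-2)"
    using p2 norm_triangle_ineq[of "a0 * z 1" "poly_p k dt \<alpha>0 z"] by (simp add: distrib_right)
qed

lemma sum_pow_bound:
  fixes z :: "nat \<Rightarrow> complex" and A :: "nat set" and L :: real
  assumes "\<And>j. j \<in> A \<Longrightarrow> norm (z j) \<le> L"
  shows "norm (\<Sum>i\<in>A. z i ^ d) \<le> real (card A) * L ^ d"
proof -
  have "norm (\<Sum>i\<in>A. z i ^ d) \<le> (\<Sum>i\<in>A. norm (z i) ^ d)"
    by (rule order_trans[OF norm_sum]) (simp add: norm_power)
  also have "\<dots> \<le> (\<Sum>i\<in>A. L ^ d)" by (intro sum_mono power_mono assms) auto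
  finally show ?thesis by simp
qed

lemma S1:
  "max 1 (supnorm k (pws k d dt a0 \<alpha>0 z)) \<le> Kc k dt Mt * (max 1 (supnorm k z)) ^ d"
proof -
  define L where "L = max 1 (supnorm k z)"
  have L1: "1 \<le> L" unfolding L_def by simp
  have hz: "\<And>j. j \<in> {1..k} \<Longrightarrow> norm (z j) \<le> L" unfolding L_def using k3
    by (simp add: le_max_iff_disj supnorm_ge)
  have Ld1: "L ^ (d-1) \<le> L ^ d" and Ld2: "L ^ (d-2) \<le> L ^ d" and Ld0: "1 \<le> L ^ d"
    using L1 by (auto intro: power_increasing)
  have Q0: "0 \<le> Qc k dt Mt" by (rule Qc_nonneg)
  have bnd: "norm (pws k d dt a0 \<alpha>0 z j) \<le> Kc k dt Mt * L ^ d" if j: "j \<in> {1..k}" for j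
  proof (cases "j = k")
    case False
    then have "norm (pws k d dt a0 \<alpha>0 z j) \<le> 2 * L ^ (d-1)" using coord_bounds(1)[OF hz L1] j by auto
    also have "\<dots> \<le> Kc k dt Mt * L ^ d" using Ld1 Mt0 Q0 Ld0 L1 unfolding Kc_def
      by (intro mult_mono) auto
    finally show ?thesis .
  next
    case True
    have "norm (pws k d dt a0 \<alpha>0 z j) \<le> norm (a0 * z 1 + poly_p k dt \<alpha>0 z) + norm (\<Sum>i=2..k. z i ^ d)"
      using True pws_k[OF k3] by (simp add: norm_triangle_ineq)
    also have "\<dots> \<le> (Mt + Qc k dt Mt) * L ^ (d-2) + real (card {2..k}) * L ^ d"
      using coord_bounds(2)[OF hz L1] sum_pow_bound[of "{2..k}" z L] hz by (intro add_mono) auto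
    also have "\<dots> \<le> (Mt + Qc k dt Mt) * L ^ d + real k * L ^ d"
      using Ld2 Mt0 Q0 Ld0 L1 by (intro add_mono mult_mono) auto
    also have "\<dots> \<le> Kc k dt Mt * L ^ d" unfolding Kc_def using Ld0 by (simp add: algebra_simps)
    finally show ?thesis .
  qed
  have "supnorm k (pws k d dt a0 \<alpha>0 z) \<le> Kc k dt Mt * L ^ d" using k3 bnd by (intro supnorm_le) auto
  moreover have "1 \<le> Kc k dt Mt * L ^ d"
  proof -
    have K1: "1 \<le> Kc k dt Mt" using Mt0 Q0 unfolding Kc_def by simp
    show ?thesis using mult_mono[OF K1 Ld0] K1 by simp
  qed
  ultimately show ?thesis unfolding L_def by simp
qed

lemma lam_ge: "12 \<le> lamc k" unfolding lamc_def using k3 by simp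
lemma R_ge: "4 * lamc k + 4 * (Mt + Qc k dt Mt) + 4 \<le> Rc k dt Mt" unfolding Rc_def by simp
lemma R_ge1: "1 \<le> Rc k dt Mt" using R_ge lam_ge Qc_nonneg Mt0 by (simp add: algebra_simps)

lemma S2:
  assumes V: "Vp k (lamc k) (Rc k dt Mt) z"
  shows "Vp k (lamc k) (Rc k dt Mt) (pws k d dt a0 \<alpha>0 z) \<and>
    norm (z k) ^ d / 2 \<le> norm (pws k d dt a0 \<alpha>0 z k) \<and>
    2 * norm (z k) \<le> norm (pws k d dt a0 \<alpha>0 z k) \<and>
    (\<forall>i\<in>{1..k-1}. norm (pws k d dt a0 \<alpha>0 z i) * norm (z k) \<le> 4 * norm (pws k d dt a0 \<alpha>0 z k))"
proof -
  define L where "L = norm (z k)"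
  define lam where "lam = lamc k"
  define R where "R = Rc k dt Mt"
  define Q where "Q = Qc k dt Mt"
  define T where "T = pws k d dt a0 \<alpha>0 z"
  have lam1: "12 \<le> lam" unfolding lam_def by (rule lam_ge)
  have Q0: "0 \<le> Q" unfolding Q_def by (rule Qc_nonneg)
  have RL: "R < L" using V unfolding Vp_def L_def R_def by simp
  have Rb: "4 * lam + 4 * (Mt + Q) + 4 \<le> R" unfolding lam_def R_def Q_def by (rule R_ge)
  have L4: "4 \<le> L" and L1: "1 \<le> L" and Llam: "4 * lam \<le> L" and LMQ: "4 * (Mt + Q) \<le> L"
    using RL Rb lam1 Q0 Mt0 by (simp_all add: algebra_simps)
  have small: "lam * norm (z i) \<le> L" if "i \<in> {1..k-1}" for i
    using V that unfolding Vp_def L_def lam_def R_def by auto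
  have hz: "norm (z j) \<le> L" if "j \<in> {1..k}" for j
  proof (cases "j = k")
    case False
    then have "lam * norm (z j) \<le> L" using small that by auto
    moreover have "norm (z j) \<le> lam * norm (z j)" using lam1 by (simp add: mult_le_cancel_right1)
    ultimately show ?thesis by linarith
  qed (simp add: L_def)
  have Ld: "L ^ d = L ^ (d-1) * L" using dtd by (cases d) (auto simp: power_Suc2)
  have Ld2: "L ^ d = L ^ (d-2) * L ^ 2"
  proof -
    have "d = (d-2) + 2" using dtd by simp
    then show ?thesis by (metis power_add)
  qed
  have LLd1: "L \<le> L ^ (d-1)" using L1 dtd power_increasing[of 1 "d-1" L] by simp
  have L2: "L \<le> L ^ 2" using L1 by (simp add: power2_eq_square)
  have Ld2pos: "0 \<le> L ^ (d-2)" using L1 by simp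
  have ksplit: "(\<Sum>i=2..k. z i ^ d) = (\<Sum>i=2..k-1. z i ^ d) + z k ^ d"
  proof -
    have "k = Suc (k-1)" using k3 by simp
    then have "(\<Sum>i=2..k. z i ^ d) = (\<Sum>i=2..Suc (k-1). z i ^ d)" by simp
    also have "\<dots> = (\<Sum>i=2..k-1. z i ^ d) + z (Suc (k-1)) ^ d" using k3 by (subst sum.cl_ivl_Suc) auto
    finally show ?thesis using \<open>k = Suc (k-1)\<close> by simp
  qed
  have Tk: "T k = z k ^ d + ((a0 * z 1 + poly_p k dt \<alpha>0 z) + (\<Sum>i=2..k-1. z i ^ d))"
    unfolding T_def pws_k[OF k3] ksplit by (simp add: algebra_simps)
  have lamd: "lam \<le> lam ^ d" using lam1 dtd power_increasing[of 1 d lam] by simp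
  have hs: "norm (z j) \<le> L / lam" if "j \<in> {2..k-1}" for j
    using small[of j] that lam1 by (auto simp: field_simps)
  have "norm (\<Sum>i=2..k-1. z i ^ d) \<le> real (card {2..k-1}) * (L / lam) ^ d"
    using hs by (intro sum_pow_bound) auto
  also have "\<dots> \<le> real k * (L ^ d / lam)"
  proof (intro mult_mono)
    show "real (card {2..k-1}) \<le> real k" by simp
    have "(L / lam) ^ d = L ^ d / lam ^ d" by (simp add: power_divide)
    also have "\<dots> \<le> L ^ d / lam" using lamd lam1 L1 by (intro divide_left_mono) auto
    finally show "(L / lam) ^ d \<le> L ^ d / lam" .
  qed (use L1 lam1 in auto)
  also have "\<dots> = L ^ d / 4" unfolding lam_def lamc_def using k3 by simp
  finally have n1: "norm (\<Sum>i=2..k-1. z i ^ d) \<le> L ^ d / 4" .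
  have "norm (a0 * z 1 + poly_p k dt \<alpha>0 z) \<le> (Mt + Q) * L ^ (d-2)"
    unfolding Q_def by (rule coord_bounds(2)[OF hz L1])
  also have "\<dots> \<le> L ^ d / 4"
  proof -
    have "4 * ((Mt + Q) * L ^ (d-2)) = (4 * (Mt + Q)) * L ^ (d-2)" by simp
    also have "\<dots> \<le> L ^ 2 * L ^ (d-2)" using LMQ L2 Ld2pos by (intro mult_right_mono) auto
    also have "\<dots> = L ^ d" using Ld2 by simp
    finally show ?thesis by simp
  qed
  finally have n2: "norm (a0 * z 1 + poly_p k dt \<alpha>0 z) \<le> L ^ d / 4" .
  have "norm (z k ^ d) - norm ((a0 * z 1 + poly_p k dt \<alpha>0 z) + (\<Sum>i=2..k-1. z i ^ d)) \<le> norm (T k)"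
    unfolding Tk by (rule norm_diff_ineq)
  moreover have "norm ((a0 * z 1 + poly_p k dt \<alpha>0 z) + (\<Sum>i=2..k-1. z i ^ d)) \<le> L ^ d / 4 + L ^ d / 4"
    using n1 n2 norm_triangle_ineq order_trans add_mono by blast
  moreover have "norm (z k ^ d) = L ^ d" unfolding L_def by (simp add: norm_power)
  ultimately have lowk: "L ^ d / 2 \<le> norm (T k)" by linarith
  have "4 * L \<le> L ^ (d-1) * L" using mult_right_mono[of 4 "L^(d-1)" L] L4 LLd1 L1 by simp
  then have "4 * L \<le> L ^ d" unfolding Ld .
  then have twoL: "2 * L \<le> norm (T k)" using lowk by linarith
  have oth: "norm (T i) \<le> 2 * L ^ (d-1)" if "i \<in> {1..k-1}" for i
    unfolding T_def using coord_bounds(1)[OF hz L1] that by auto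
  have "4 * lam * L ^ (d-1) \<le> L * L ^ (d-1)" using Llam L1 by (intro mult_right_mono) auto
  then have lamo: "lam * (2 * L ^ (d-1)) \<le> L ^ d / 2" unfolding Ld by (simp add: algebra_simps)
  have V2: "Vp k lam R T"
    unfolding Vp_def
  proof (intro conjI ballI)
    show "R < norm (T k)" using RL twoL L1 by linarith
    fix i assume i: "i \<in> {1..k-1}"
    have "lam * norm (T i) \<le> lam * (2 * L ^ (d-1))" using oth[OF i] lam1 by (intro mult_left_mono) auto
    then show "lam * norm (T i) \<le> norm (T k)" using lamo lowk by linarith
  qed
  have rat: "norm (T i) * L \<le> 4 * norm (T k)" if i: "i \<in> {1..k-1}" for i
  proof -
    have "norm (T i) * L \<le> 2 * L ^ (d-1) * L" using oth[OF i] L1 by (intro mult_right_mono) auto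
    also have "\<dots> = 2 * L ^ d" unfolding Ld by simp
    finally show ?thesis using lowk by linarith
  qed
  show ?thesis using V2 lowk twoL rat unfolding T_def L_def lam_def R_def by auto
qed

lemma S3:
  assumes NV: "\<not> Vp k (lamc k) (Rc k dt Mt) (pws k d dt a0 \<alpha>0 z)"
  shows "max 1 (supnorm k (pws k d dt a0 \<alpha>0 z)) \<le> Bc k dt Mt * (max 1 (supnorm k z)) ^ (d-1)"
proof -
  define L where "L = max 1 (supnorm k z)"
  define lam where "lam = lamc k"
  define R where "R = Rc k dt Mt"
  define T where "T = pws k d dt a0 \<alpha>0 z"
  have L1: "1 \<le> L" unfolding L_def by simp
  have hz: "\<And>j. j \<in> {1..k} \<Longrightarrow> norm (z j) \<le> L" unfolding L_def using k3
    by (simp add: le_max_iff_disj supnorm_ge)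
  have lam1: "12 \<le> lam" unfolding lam_def by (rule lam_ge)
  have R1: "1 \<le> R" unfolding R_def by (rule R_ge1)
  have P1: "1 \<le> L ^ (d-1)" using L1 by simp
  have B: "Bc k dt Mt = 2 * lam * R" unfolding Bc_def lam_def R_def by simp
  have oth: "norm (T i) \<le> 2 * L ^ (d-1)" if "i \<in> {1..k-1}" for i
    unfolding T_def using coord_bounds(1)[OF hz L1] that by auto
  have lR: "1 \<le> lam * R" using mult_mono[of 1 lam 1 R] lam1 R1 by simp
  have lamR: "2 * lam \<le> 2 * lam * R" "R \<le> 2 * lam * R" "2 \<le> 2 * lam * R" using lam1 R1 lR
    by (auto simp: mult_le_cancel_left1 mult_le_cancel_right1)
  have goal: "norm (T j) \<le> 2 * lam * R * L ^ (d-1)" if j: "j \<in> {1..k}" for j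
  proof (cases "j = k")
    case False
    then have "norm (T j) \<le> 2 * L ^ (d-1)" using oth j by auto
    also have "\<dots> \<le> 2 * lam * R * L ^ (d-1)" using lamR P1 by (intro mult_right_mono) auto
    finally show ?thesis .
  next
    case True
    from NV have "norm (T k) \<le> R \<or> (\<exists>i\<in>{1..k-1}. norm (T k) < lam * norm (T i))"
      unfolding Vp_def T_def lam_def R_def by (auto simp: not_le not_less)
    then show ?thesis
    proof
      assume "norm (T k) \<le> R"
      moreover have "R \<le> 2 * lam * R * L ^ (d-1)"
      proof -
        have "2 * lam * R * 1 \<le> 2 * lam * R * L ^ (d-1)" by (rule mult_left_mono[OF P1]) (use lam1 R1 in \<open>simp add: zero_le_mult_iff\<close>)
        then show ?thesis using lamR(2) by simp
      qed
      ultimately show ?thesis unfolding True by linarith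
    next
      assume "\<exists>i\<in>{1..k-1}. norm (T k) < lam * norm (T i)"
      then obtain i where i: "i \<in> {1..k-1}" "norm (T k) < lam * norm (T i)" by blast
      have "lam * norm (T i) \<le> lam * (2 * L ^ (d-1))" using oth[OF i(1)] lam1 by (intro mult_left_mono) auto
      also have "\<dots> = 2 * lam * L ^ (d-1)" by simp
      also have "\<dots> \<le> 2 * lam * R * L ^ (d-1)" using lamR P1 by (intro mult_right_mono) auto
      finally show ?thesis using i unfolding True by linarith
    qed
  qed
  have "supnorm k T \<le> 2 * lam * R * L ^ (d-1)" using k3 goal by (intro supnorm_le) auto
  moreover have "1 \<le> 2 * lam * R * L ^ (d-1)"
  proof -
    have "1 * 1 \<le> (2 * lam * R) * L ^ (d-1)" by (rule mult_mono) (use lamR P1 lR in \<open>auto simp: mult.commute\<close>)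
    then show ?thesis by simp
  qed
  ultimately show ?thesis unfolding B T_def L_def by simp
qed

end



definition "stepok k d lam R K B T \<longleftrightarrow>
  (\<forall>z. max 1 (supnorm k (T z)) \<le> K * (max 1 (supnorm k z)) ^ d) \<and>
  (\<forall>z. Vp k lam R z \<longrightarrow> Vp k lam R (T z) \<and> norm (z k) ^ d / 2 \<le> norm (T z k) \<and>
       2 * norm (z k) \<le> norm (T z k) \<and>
       (\<forall>i\<in>{1..k-1}. norm (T z i) * norm (z k) \<le> 4 * norm (T z k))) \<and>
  (\<forall>z. \<not> Vp k lam R (T z) \<longrightarrow> max 1 (supnorm k (T z)) \<le> B * (max 1 (supnorm k z)) ^ (d-1))"

lemma stepok_pws:
  assumes "3 \<le> k" "1 \<le> dt" "dt + 2 \<le> d" "0 \<le> Mt" "norm a0 \<le> Mt" "\<forall>i\<in>midx k dt. norm (\<alpha>0 i) \<le> Mt"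
    "\<forall>i\<in>midx k dt. mdeg k i > dt \<longrightarrow> \<alpha>0 i = 0"
  shows "stepok k d (lamc k) (Rc k dt Mt) (Kc k dt Mt) (Bc k dt Mt) (pws k d dt a0 \<alpha>0)"
  unfolding stepok_def using S1[OF assms] S2[OF assms] S3[OF assms] by blast

definition "uu k T z n = ln (max 1 (supnorm k (comp_seq T n z)))"
definition "ff k d T z n = uu k T z n / real d ^ n"

context
  fixes k d :: nat and lam R K B :: real and T :: "nat \<Rightarrow> (nat \<Rightarrow> complex) \<Rightarrow> (nat \<Rightarrow> complex)"
  assumes k3: "3 \<le> k" and d3: "3 \<le> d" and lam1: "1 \<le> lam" and R1: "1 \<le> R" and K2: "2 \<le> K" and B1: "1 \<le> B"
    and ok: "\<And>n. 1 \<le> n \<Longrightarrow> stepok k d lam R K B (T n)"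
begin

lemma okS: "stepok k d lam R K B (T (Suc n))" using ok by simp

lemma u_nonneg: "0 \<le> uu k T z n" unfolding uu_def by simp

lemma lnK: "0 \<le> ln K" "ln 2 \<le> ln K" using K2 by auto

lemma U1: "uu k T z (Suc n) \<le> real d * uu k T z n + ln K"
proof -
  define M where "M = max 1 (supnorm k (comp_seq T n z))"
  have M1: "1 \<le> M" unfolding M_def by simp
  have "max 1 (supnorm k (comp_seq T (Suc n) z)) \<le> K * M ^ d"
    using okS[of n] unfolding stepok_def M_def by simp
  then have "ln (max 1 (supnorm k (comp_seq T (Suc n) z))) \<le> ln (K * M ^ d)"
    by (intro ln_mono) auto
  also have "ln (K * M ^ d) = ln K + real d * ln M" using K2 M1 by (simp add: ln_mult ln_realpow)
  finally show ?thesis unfolding uu_def M_def by simp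
qed

lemma Vp_max: "Vp k lam R x \<Longrightarrow> max 1 (supnorm k x) = norm (x k)"
  using Vp_supnorm[of k lam R x] k3 lam1 R1 unfolding Vp_def by auto

lemma U2:
  assumes V: "Vp k lam R (comp_seq T n z)"
  shows "Vp k lam R (comp_seq T (Suc n) z) \<and> real d * uu k T z n - ln K \<le> uu k T z (Suc n)"
proof -
  define x where "x = comp_seq T n z"
  have V': "Vp k lam R x" using V x_def by simp
  have st: "Vp k lam R (T (Suc n) x) \<and> norm (x k) ^ d / 2 \<le> norm (T (Suc n) x k)"
    using okS[of n] V' unfolding stepok_def by blast
  have xs: "comp_seq T (Suc n) z = T (Suc n) x" unfolding x_def by simp
  have L1: "1 < norm (x k)" using V' R1 unfolding Vp_def by simp
  have "real d * ln (norm (x k)) - ln K \<le> real d * ln (norm (x k)) - ln 2" using lnK by simp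
  also have "\<dots> = ln (norm (x k) ^ d / 2)" using L1 by (auto simp: ln_div ln_realpow)
  also have "\<dots> \<le> ln (norm (T (Suc n) x k))"
  proof -
    have "0 < norm (x k)" using L1 by linarith
    then have "0 < norm (x k) ^ d / 2" by simp
    then show ?thesis using st by (intro ln_mono) auto
  qed
  finally have "real d * ln (norm (x k)) - ln K \<le> ln (norm (T (Suc n) x k))" .
  moreover have "uu k T z n = ln (norm (x k))" unfolding uu_def x_def[symmetric] Vp_max[OF V'] ..
  moreover have "uu k T z (Suc n) = ln (norm (T (Suc n) x k))"
    unfolding uu_def xs Vp_max[OF conjunct1[OF st]] ..
  ultimately show ?thesis using st xs by simp
qed

lemma U2': assumes V: "Vp k lam R (comp_seq T n z)" and nm: "n \<le> m" shows "Vp k lam R (comp_seq T m z)"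
  using nm
proof (induction m rule: dec_induct)
  case base then show ?case using V by simp
next
  case (step m) then show ?case using U2[of m z] by blast
qed
lemma U3:
  assumes NV: "\<not> Vp k lam R (comp_seq T (Suc n) z)"
  shows "uu k T z (Suc n) \<le> real (d-1) * uu k T z n + ln B"
proof -
  define M where "M = max 1 (supnorm k (comp_seq T n z))"
  have M1: "1 \<le> M" unfolding M_def by simp
  have "max 1 (supnorm k (comp_seq T (Suc n) z)) \<le> B * M ^ (d-1)"
    using okS[of n] NV unfolding stepok_def M_def by simp
  then have "ln (max 1 (supnorm k (comp_seq T (Suc n) z))) \<le> ln (B * M ^ (d-1))"
    by (intro ln_mono) auto
  also have "ln (B * M ^ (d-1)) = ln B + real (d-1) * ln M" using B1 M1 by (simp add: ln_mult ln_realpow)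
  finally show ?thesis unfolding uu_def M_def by simp
qed

lemma U3':
  assumes "\<not> Vp k lam R (comp_seq T m z)"
  shows "uu k T z m + ln B \<le> real (d-1) ^ m * (uu k T z 0 + ln B)"
  using assms
proof (induction m)
  case 0 then show ?case by simp
next
  case (Suc m)
  have nv: "\<not> Vp k lam R (comp_seq T m z)" using Suc.prems U2[of m z] by blast
  have IH: "uu k T z m + ln B \<le> real (d-1) ^ m * (uu k T z 0 + ln B)" by (rule Suc.IH[OF nv])
  have b0: "0 \<le> ln B" using B1 by simp
  have d2: "2 \<le> real (d-1)" using d3 by simp
  have "uu k T z (Suc m) + ln B \<le> real (d-1) * uu k T z m + 2 * ln B"
    using U3[OF Suc.prems] by simp
  also have "\<dots> \<le> real (d-1) * (uu k T z m + ln B)"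
    using mult_right_mono[OF d2 b0] by (simp add: algebra_simps)
  also have "\<dots> \<le> real (d-1) * (real (d-1) ^ m * (uu k T z 0 + ln B))"
    using IH by (intro mult_left_mono) auto
  finally show ?case by simp
qed

definition "gg z n = ff k d T z n + ln K / real d ^ n"
definition "hh z n = ff k d T z n - ln K / real d ^ n"

lemma gg_Suc: "gg z (Suc n) \<le> gg z n"
proof -
  define D where "D = real d ^ n"
  have D0: "0 < D" unfolding D_def using d3 by simp
  have dd: "real d ^ Suc n = real d * D" unfolding D_def by simp
  have "2 * ln K \<le> real d * ln K" using lnK d3 by (intro mult_right_mono) auto
  then have "uu k T z (Suc n) + ln K \<le> real d * (uu k T z n + ln K)"
    using U1[of z n] by (simp add: algebra_simps)
  then have "(uu k T z (Suc n) + ln K) / (real d * D) \<le> real d * (uu k T z n + ln K) / (real d * D)"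
    using D0 d3 by (intro divide_right_mono) auto
  also have "\<dots> = (uu k T z n + ln K) / D" using d3 by simp
  finally show ?thesis unfolding gg_def ff_def dd D_def[symmetric] by (simp add: add_divide_distrib)
qed

lemma hh_Suc: assumes V: "Vp k lam R (comp_seq T n z)" shows "hh z n \<le> hh z (Suc n)"
proof -
  define D where "D = real d ^ n"
  have D0: "0 < D" unfolding D_def using d3 by simp
  have dd: "real d ^ Suc n = real d * D" unfolding D_def by simp
  have "2 * ln K \<le> real d * ln K" using lnK d3 by (intro mult_right_mono) auto
  then have "real d * (uu k T z n - ln K) \<le> uu k T z (Suc n) - ln K"
    using conjunct2[OF U2[OF V]] by (simp add: algebra_simps)
  then have "real d * (uu k T z n - ln K) / (real d * D) \<le> (uu k T z (Suc n) - ln K) / (real d * D)"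
    using D0 d3 by (intro divide_right_mono) auto
  moreover have "real d * (uu k T z n - ln K) / (real d * D) = (uu k T z n - ln K) / D" using d3 by simp
  ultimately show ?thesis unfolding hh_def ff_def dd D_def[symmetric] by (simp add: diff_divide_distrib)
qed

lemma gg_mono: "m \<le> n \<Longrightarrow> gg z n \<le> gg z m"
  by (rule lift_Suc_antimono_le[of "gg z"]) (rule gg_Suc)

lemma hh_mono: assumes V: "Vp k lam R (comp_seq T m z)" and mn: "m \<le> n" shows "hh z m \<le> hh z n"
  using mn
proof (induction n rule: dec_induct)
  case base then show ?case by simp
next
  case (step n)
  then show ?case using hh_Suc[OF U2'[OF V step(1)]] by simp
qed

lemma ff_nonneg: "0 \<le> ff k d T z n" unfolding ff_def using u_nonneg by simp

lemma cK0: "(\<lambda>n. ln K / real d ^ n) \<longlonglongrightarrow> 0"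
  by (rule LIMSEQ_divide_realpow_zero) (use d3 in simp)

lemma ff_conv: "ff k d T z \<longlonglongrightarrow> lim (ff k d T z)"
proof -
  have dec: "decseq (gg z)" by (rule decseq_SucI) (rule gg_Suc)
  have lb: "\<forall>i. 0 \<le> gg z i" unfolding gg_def using ff_nonneg lnK d3 by (auto intro!: add_nonneg_nonneg divide_nonneg_pos)
  obtain L where L: "gg z \<longlonglongrightarrow> L" using decseq_convergent[OF dec lb] by blast
  have "(\<lambda>n. gg z n - ln K / real d ^ n) \<longlonglongrightarrow> L - 0" by (intro tendsto_diff L cK0)
  then have "ff k d T z \<longlonglongrightarrow> L" unfolding gg_def by simp
  then show ?thesis using limI by metis
qed

lemma lim_upper: "lim (ff k d T z) \<le> gg z m"
proof -
  have "gg z \<longlonglongrightarrow> lim (ff k d T z) + 0" unfolding gg_def[abs_def] by (intro tendsto_add ff_conv cK0)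
  then have "gg z \<longlonglongrightarrow> lim (ff k d T z)" by simp
  then show ?thesis using LIMSEQ_le_const2[of "gg z" _ "gg z m"] gg_mono by blast
qed

lemma lim_lower: assumes "Vp k lam R (comp_seq T m z)" shows "hh z m \<le> lim (ff k d T z)"
proof -
  have "hh z \<longlonglongrightarrow> lim (ff k d T z) - 0" unfolding hh_def[abs_def] by (intro tendsto_diff ff_conv cK0)
  then have "hh z \<longlonglongrightarrow> lim (ff k d T z)" by simp
  then show ?thesis using LIMSEQ_le_const[of "hh z" _ "hh z m"] hh_mono[OF assms] by blast
qed

lemma lim_nonneg: "0 \<le> lim (ff k d T z)"
  by (rule LIMSEQ_le_const[OF ff_conv]) (use ff_nonneg in blast)

lemma esc:
  assumes z: "z \<in> Ck k" and V0: "Vp k lam R (comp_seq T n0 z)"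
  shows "z \<in> escaping k T"
proof -
  define F where "F n = comp_seq T n z" for n
  have VF: "Vp k lam R (F n)" if "n0 \<le> n" for n using U2'[OF V0 that] unfolding F_def .
  define c0 where "c0 = R / 2 ^ n0"
  have c0: "0 < c0" using R1 unfolding c0_def by simp
  have grow: "c0 * 2 ^ n \<le> norm (F n k)" if "n0 \<le> n" for n
    using that
  proof (induction n rule: dec_induct)
    case base show ?case using V0 unfolding c0_def Vp_def F_def by simp
  next
    case (step n)
    have "2 * norm (F n k) \<le> norm (F (Suc n) k)"
      using okS[of n] VF[OF step(1)] unfolding stepok_def F_def by simp
    then show ?case using step(3) by simp
  qed
  have ratio: "norm (F (Suc n) i) * norm (F n k) \<le> 4 * norm (F (Suc n) k)" if "n0 \<le> n" "i \<in> {1..k-1}" for n i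
    using okS[of n] VF[OF that(1)] that(2) unfolding stepok_def F_def by simp
  have Fk0: "0 < norm (F n k)" if "n0 \<le> n" for n using VF[OF that] R1 unfolding Vp_def by auto
  define e where "e n = (8 / c0) / 2 ^ n" for n
  have e0: "e \<longlonglongrightarrow> 0" unfolding e_def by (rule LIMSEQ_divide_realpow_zero) simp
  have hom_i: "hom k x i = x i" if "i \<in> {1..k}" for x :: "nat \<Rightarrow> complex" and i using that unfolding hom_def by auto
  have hom_k1: "hom k x (k+1) = 1" for x :: "nat \<Rightarrow> complex" unfolding hom_def by simp
  have hk: "hom k x k = x k" for x :: "nat \<Rightarrow> complex" using hom_i[of k x] k3 by simp
  have ev1: "\<forall>\<^sub>F n in sequentially. hom k (F n) k \<noteq> 0"
    unfolding eventually_sequentially hk using Fk0 by fastforce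
  have lims: "((\<lambda>n. hom k (F n) i / hom k (F n) k) \<longlongrightarrow> ek k i / ek k k) sequentially"
    if i: "i \<in> {1..k+1}" for i
  proof -
    consider "i = k" | "i = k+1" | "i \<in> {1..k-1}" using i by fastforce
    then show ?thesis
    proof cases
      case 1
      have "\<forall>\<^sub>F n in sequentially. hom k (F n) i / hom k (F n) k = 1"
        using ev1 unfolding 1 by (rule eventually_mono) simp
      then have "((\<lambda>n. hom k (F n) i / hom k (F n) k) \<longlongrightarrow> 1) sequentially" by (rule tendsto_eventually)
      then show ?thesis unfolding 1 ek_def by simp
    next
      case 2
      have "\<forall>\<^sub>F n in sequentially. norm (hom k (F n) i / hom k (F n) k) \<le> e n"
        unfolding eventually_sequentially
      proof (intro exI[of _ n0] allI impI)
        fix n assume n: "n0 \<le> n"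
        have "norm (hom k (F n) i / hom k (F n) k) = 1 / norm (F n k)"
          unfolding 2 hom_k1 hk by (simp add: norm_divide)
        also have "\<dots> \<le> 1 / (c0 * 2 ^ n)" using grow[OF n] c0 Fk0[OF n] by (intro divide_left_mono mult_pos_pos) auto
        also have "\<dots> \<le> e n" unfolding e_def using c0 by (simp add: field_simps)
        finally show "norm (hom k (F n) i / hom k (F n) k) \<le> e n" .
      qed
      then have "((\<lambda>n. hom k (F n) i / hom k (F n) k) \<longlongrightarrow> 0) sequentially" using e0 by (rule Lim_null_comparison)
      then show ?thesis unfolding 2 ek_def by simp
    next
      case 3
      have ik: "i \<noteq> k" using 3 k3 by auto
      have "\<forall>\<^sub>F n in sequentially. norm (hom k (F n) i / hom k (F n) k) \<le> e n"
        unfolding eventually_sequentially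
      proof (intro exI[of _ "Suc n0"] allI impI)
        fix n assume n: "Suc n0 \<le> n"
        then obtain m where m: "n = Suc m" "n0 \<le> m" by (cases n) auto
        have hi: "hom k (F (Suc m)) i = F (Suc m) i" using 3 k3 by (intro hom_i) auto
        have P1: "0 < norm (F (Suc m) k)" using Fk0[of "Suc m"] m by simp
        have P2: "c0 * 2 ^ m \<le> norm (F m k)" using grow m by simp
        have A: "norm (F (Suc m) i) * norm (F m k) \<le> 4 * norm (F (Suc m) k)" using ratio[OF m(2) 3] .
        have "norm (F (Suc m) i) * (c0 * 2 ^ m) \<le> norm (F (Suc m) i) * norm (F m k)"
          using P2 by (intro mult_left_mono) auto
        then have A2: "norm (F (Suc m) i) * (c0 * 2 ^ m) \<le> 4 * norm (F (Suc m) k)" using A by linarith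
        have "norm (F (Suc m) i) / norm (F (Suc m) k) \<le> 4 / (c0 * 2 ^ m)"
          using A2 P1 c0 by (simp add: field_simps)
        also have "\<dots> = e (Suc m)" unfolding e_def by (simp add: field_simps)
        finally show "norm (hom k (F n) i / hom k (F n) k) \<le> e n"
          unfolding m(1) hi hk by (simp add: norm_divide)
      qed
      then have "((\<lambda>n. hom k (F n) i / hom k (F n) k) \<longlongrightarrow> 0) sequentially" using e0 by (rule Lim_null_comparison)
      then show ?thesis using ik unfolding ek_def by simp
    qed
  qed
  have "proj_conv k (\<lambda>n. hom k (F n)) (ek k)"
    unfolding proj_conv_def
    using k3 ev1 lims by (intro bexI[of _ k]) (auto simp: ek_def)
  then show ?thesis unfolding escaping_def F_def using z by simp
qed

lemma green_eq: "green k d T z = (if z \<in> escaping k T then lim (ff k d T z) else 0)"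
proof -
  have "(\<lambda>n. logplus (supnorm k (comp_seq T n z)) / real d ^ n) = ff k d T z"
    unfolding ff_def uu_def using k3 by (intro ext) (simp add: logplus_eq supnorm_nonneg)
  then show ?thesis unfolding green_def by simp
qed

lemma green_bounds:
  shows "0 \<le> green k d T z" "green k d T z \<le> ff k d T z m + ln K / real d ^ m"
proof -
  have g0: "0 \<le> gg z m" unfolding gg_def using ff_nonneg lnK d3 by (auto intro!: add_nonneg_nonneg divide_nonneg_pos)
  show "0 \<le> green k d T z" unfolding green_eq using lim_nonneg by simp
  show "green k d T z \<le> ff k d T z m + ln K / real d ^ m"
    unfolding green_eq using lim_upper[of z m] g0 unfolding gg_def by simp
qed

lemma green_lower:
  assumes "z \<in> Ck k" "Vp k lam R (comp_seq T m z)"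
  shows "ff k d T z m - ln K / real d ^ m \<le> green k d T z"
  unfolding green_eq using esc[OF assms] lim_lower[OF assms(2)] unfolding hh_def by simp

end



lemma comp_seq_periodize:
  assumes "n \<le> m" shows "comp_seq (periodize m T) n = comp_seq T n"
  using assms
proof (induction n)
  case 0 then show ?case by simp
next
  case (Suc n)
  have "n mod m = n" using Suc.prems by simp
  then have "periodize m T (Suc n) = T (Suc n)" unfolding periodize_def by simp
  then show ?case using Suc by simp
qed

theorem lemma3p10:
  fixes k d dt :: nat and a :: "nat \<Rightarrow> complex" and \<alpha> :: "nat \<Rightarrow> (nat \<Rightarrow> nat) \<Rightarrow> complex"
    and mt Mt \<epsilon> :: real and C :: "(nat \<Rightarrow> complex) set"
  assumes "k \<ge> 3" and "dt \<ge> 1" and "dt + 2 \<le> d"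
    and "mt > 0" and "Mt > 0"
    and "\<forall>n\<ge>1. mt < norm (a n) \<and> norm (a n) < Mt"
    and "\<forall>n\<ge>1. \<forall>i\<in>midx k dt. norm (\<alpha> n i) < Mt"
    and "\<forall>n\<ge>1. \<forall>i\<in>midx k dt. mdeg k i > dt \<longrightarrow> \<alpha> n i = 0"
    and "\<forall>n\<ge>1. dt = 1 \<or> (\<exists>i\<in>midx k dt. mdeg k i = dt \<and> \<alpha> n i \<noteq> 0)"
    and "compact C" and "C \<subseteq> Ck k" and "\<epsilon> > 0"
  shows "\<exists>mC\<ge>1. \<forall>m\<ge>mC. \<exists>\<delta><\<epsilon>. \<forall>z\<in>C.
           \<bar>green k d (\<lambda>n. pws k d dt (a n) (\<alpha> n)) z
            - green k d (periodize m (\<lambda>n. pws k d dt (a n) (\<alpha> n))) z\<bar> \<le> \<delta>"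
proof -
  define T0 where "T0 = (\<lambda>n. pws k d dt (a n) (\<alpha> n))"
  define lam where "lam = lamc k"
  define R where "R = Rc k dt Mt"
  define K where "K = Kc k dt Mt"
  define B where "B = Bc k dt Mt"
  have k3: "3 \<le> k" using assms(1) .
  have Mt0: "0 \<le> Mt" using assms(5) by simp
  have d3: "3 \<le> d" using assms(2,3) by simp
  have Q0: "0 \<le> Qc k dt Mt" unfolding Qc_def using Mt0 by simp
  have lam1: "1 \<le> lam" unfolding lam_def lamc_def using k3 by simp
  have R1: "1 \<le> R" unfolding R_def Rc_def lamc_def using Q0 Mt0 by simp
  have K2: "2 \<le> K" unfolding K_def Kc_def using Q0 Mt0 by simp
  have B1: "1 \<le> B"
  proof -
    have "1 * 1 \<le> lam * R" using lam1 R1 by (intro mult_mono) auto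
    then show ?thesis unfolding B_def Bc_def lam_def[symmetric] R_def[symmetric] by simp
  qed
  have okn: "stepok k d lam R K B (T0 n)" if "1 \<le> n" for n
    unfolding T0_def lam_def R_def K_def B_def
  proof (rule stepok_pws[OF k3 assms(2) assms(3) Mt0])
    show "norm (a n) \<le> Mt" using assms(6) that by (simp add: less_imp_le)
    show "\<forall>i\<in>midx k dt. norm (\<alpha> n i) \<le> Mt" using assms(7) that by (simp add: less_imp_le)
    show "\<forall>i\<in>midx k dt. dt < mdeg k i \<longrightarrow> \<alpha> n i = 0" using assms(8) that by simp
  qed
  have okm: "stepok k d lam R K B (periodize m T0 n)" if "1 \<le> n" for m n
    unfolding periodize_def by (rule okn) simp
  have GB0: "0 \<le> green k d T0 z" "green k d T0 z \<le> ff k d T0 z m + ln K / real d ^ m" for z m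
    using green_bounds[where T=T0, OF k3 d3 lam1 R1 K2 B1] okn by blast+
  have GL0: "ff k d T0 z m - ln K / real d ^ m \<le> green k d T0 z"
    if "z \<in> Ck k" "Vp k lam R (comp_seq T0 m z)" for z m
    using green_lower[where T=T0, OF k3 d3 lam1 R1 K2 B1] okn that by blast
  have U3'0: "uu k T0 z m + ln B \<le> real (d-1) ^ m * (uu k T0 z 0 + ln B)"
    if "\<not> Vp k lam R (comp_seq T0 m z)" for z m
    using U3'[where T=T0, OF k3 d3 lam1 R1 K2 B1] okn that by blast
  obtain M where M: "\<And>z i. z \<in> C \<Longrightarrow> i \<in> {1..k} \<Longrightarrow> norm (z i) \<le> M"
  proof -
    have "compact (\<Union>i\<in>{1..k}. (\<lambda>z. z i) ` C)"
      by (intro compact_UN finite_atLeastAtMost compact_continuous_image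
          continuous_on_subset[OF continuous_on_product_coordinates] assms(10)) auto
    then obtain M where "\<forall>x\<in>(\<Union>i\<in>{1..k}. (\<lambda>z. z i) ` C). norm x \<le> M"
      using compact_imp_bounded bounded_iff by metis
    then show thesis using that by blast
  qed
  define U where "U = ln (max 1 M)"
  have U0: "0 \<le> U" unfolding U_def by simp
  have uU: "uu k T z 0 \<le> U" if z: "z \<in> C" for z and T :: "nat \<Rightarrow> (nat \<Rightarrow> complex) \<Rightarrow> (nat \<Rightarrow> complex)"
  proof -
    have "supnorm k z \<le> M" using k3 M[OF z] by (intro supnorm_le) auto
    then have "max 1 (supnorm k z) \<le> max 1 M" by simp
    then show ?thesis unfolding uu_def U_def by (simp add: ln_mono)
  qed
  define b where "b = ln B"
  define c where "c = ln K"
  have b0: "0 \<le> b" unfolding b_def using B1 by simp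
  have c0: "0 \<le> c" unfolding c_def using K2 by simp
  define q where "q = real (d-1) / real d"
  have q0: "0 \<le> q" and q1: "q < 1" unfolding q_def using d3 by auto
  define E where "E m = q ^ m * (U + b) + 2 * c / real d ^ m" for m
  have "(\<lambda>m. q ^ m * (U + b) + 2 * c / real d ^ m) \<longlonglongrightarrow> 0 * (U + b) + 0"
    by (intro tendsto_add tendsto_mult LIMSEQ_power_zero tendsto_const LIMSEQ_divide_realpow_zero)
       (use q0 q1 d3 in auto)
  then have "E \<longlonglongrightarrow> 0" unfolding E_def[abs_def] by simp
  then have "\<forall>\<^sub>F m in sequentially. E m < \<epsilon> / 2" using assms(12) by (intro order_tendstoD(2)) auto
  then obtain N where N: "\<And>m. N \<le> m \<Longrightarrow> E m < \<epsilon> / 2" unfolding eventually_sequentially by blast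
  have main: "\<bar>green k d T0 z - green k d (periodize m T0) z\<bar> \<le> E m" if m: "1 \<le> m" and z: "z \<in> C" for m z
  proof -
    have GBm: "0 \<le> green k d (periodize m T0) z" "green k d (periodize m T0) z \<le> ff k d (periodize m T0) z m + ln K / real d ^ m"
      using green_bounds[where T="periodize m T0", OF k3 d3 lam1 R1 K2 B1] okm by blast+
    have GLm: "ff k d (periodize m T0) z m - ln K / real d ^ m \<le> green k d (periodize m T0) z"
      if "z \<in> Ck k" "Vp k lam R (comp_seq (periodize m T0) m z)"
      using green_lower[where T="periodize m T0", OF k3 d3 lam1 R1 K2 B1] okm that by blast
    have zC: "z \<in> Ck k" using z assms(11) by auto
    have same: "comp_seq (periodize m T0) m z = comp_seq T0 m z" using comp_seq_periodize[of m m T0] by simp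
    have ffs: "ff k d (periodize m T0) z m = ff k d T0 z m" unfolding ff_def uu_def same ..
    have D0: "0 < real d ^ m" using d3 by simp
    have Em: "0 \<le> q ^ m * (U + b)" using q0 U0 b0 by simp
    show ?thesis
    proof (cases "Vp k lam R (comp_seq T0 m z)")
      case True
      have V2: "Vp k lam R (comp_seq (periodize m T0) m z)" using True same by simp
      have "ff k d T0 z m - c / real d ^ m \<le> green k d T0 z" using GL0[OF zC True] unfolding c_def .
      moreover have "green k d T0 z \<le> ff k d T0 z m + c / real d ^ m" using GB0(2) unfolding c_def .
      moreover have "ff k d T0 z m - c / real d ^ m \<le> green k d (periodize m T0) z"
        using GLm[OF zC V2] ffs unfolding c_def by simp
      moreover have "green k d (periodize m T0) z \<le> ff k d T0 z m + c / real d ^ m"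
        using GBm(2) ffs unfolding c_def by simp
      ultimately have "\<bar>green k d T0 z - green k d (periodize m T0) z\<bar> \<le> 2 * c / real d ^ m"
        by (simp add: abs_le_iff)
      then show ?thesis unfolding E_def using Em by linarith
    next
      case False
      have "uu k T0 z m + b \<le> real (d-1) ^ m * (uu k T0 z 0 + b)" using U3'0[OF False] unfolding b_def .
      also have "\<dots> \<le> real (d-1) ^ m * (U + b)" using uU[OF z] by (intro mult_left_mono) auto
      finally have "uu k T0 z m \<le> real (d-1) ^ m * (U + b)" using b0 by linarith
      then have "uu k T0 z m / real d ^ m \<le> real (d-1) ^ m * (U + b) / real d ^ m"
        using D0 by (intro divide_right_mono) auto
      also have "\<dots> = q ^ m * (U + b)" unfolding q_def by (simp add: power_divide)
      finally have fq: "ff k d T0 z m \<le> q ^ m * (U + b)" unfolding ff_def .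
      have "0 \<le> green k d T0 z" using GB0(1) .
      moreover have "green k d T0 z \<le> ff k d T0 z m + c / real d ^ m" using GB0(2) unfolding c_def .
      moreover have "0 \<le> green k d (periodize m T0) z" using GBm(1) .
      moreover have "green k d (periodize m T0) z \<le> ff k d T0 z m + c / real d ^ m"
        using GBm(2) ffs unfolding c_def by simp
      moreover have "c / real d ^ m \<le> 2 * c / real d ^ m" using c0 D0 by (simp add: divide_right_mono)
      ultimately show ?thesis unfolding E_def using fq by (simp add: abs_le_iff)
    qed
  qed
  show ?thesis
  proof (intro exI[of _ "Suc N"] conjI allI impI)
    fix m assume m: "Suc N \<le> m"
    show "\<exists>\<delta><\<epsilon>. \<forall>z\<in>C. \<bar>green k d (\<lambda>n. pws k d dt (a n) (\<alpha> n)) z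
            - green k d (periodize m (\<lambda>n. pws k d dt (a n) (\<alpha> n))) z\<bar> \<le> \<delta>"
    proof (intro exI[of _ "\<epsilon> / 2"] conjI ballI)
      show "\<epsilon> / 2 < \<epsilon>" using assms(12) by simp
      fix z assume z: "z \<in> C"
      have "E m < \<epsilon> / 2" using N m by simp
      then show "\<bar>green k d (\<lambda>n. pws k d dt (a n) (\<alpha> n)) z
            - green k d (periodize m (\<lambda>n. pws k d dt (a n) (\<alpha> n))) z\<bar> \<le> \<epsilon> / 2"
        using main[of m z] m z unfolding T0_def by simp
    qed
  qed simp
qed


end
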